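(* Let $k \in \mathbb{N}$, and let $a(0) \leqslant a(1)\leqslant \ldots \leqslant a(k)$ be positive integers. Let $c$ be the largest real root of the polynomial equation $x^{k+1} = \sum_{i = 0}^k a(i)x^i$. Then there exists a hereditary property of ordered graphs $\mathcal{P}$ with $|\mathcal{P}_n| = c^{(1+o(1))n}$ as $n\to\infty$.
   Context: An ordered graph of order $n$ is a graph on vertex set $[n]$ with the natural order. A hereditary property of ordered graphs is a collection of ordered graphs closed under order-preserving isomorphism and under taking induced ordered subgraphs (subgraphs induced via injective order-preserving maps preserving adjacency and non-adjacency). $\mathcal{P}_n$ denotes the set of members of $\mathcal{P}$ with vertex set $[n]$. *)

theory Defs
  imports Complex_Main
begin

text \<open>An ordered graph of order n: vertex set {0..<n} (standing for [n]) with the natural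
order; edges are stored as pairs (i,j) with i < j < n.\<close>
type_synonym ograph = "nat \<times> (nat \<times> nat) set"

definition ordered_graph :: "ograph \<Rightarrow> bool" where
  "ordered_graph G \<longleftrightarrow> snd G \<subseteq> {(i,j). i < j \<and> j < fst G}"

definition induced_ordered_subgraph :: "ograph \<Rightarrow> ograph \<Rightarrow> bool" where
  "induced_ordered_subgraph H G \<longleftrightarrow>
     (\<exists>f. strict_mono_on {0..<fst H} f \<and> f ` {0..<fst H} \<subseteq> {0..<fst G} \<and>
          (\<forall>i j. i < j \<and> j < fst H \<longrightarrow> ((i,j) \<in> snd H \<longleftrightarrow> (f i, f j) \<in> snd G)))"

text \<open>Hereditary property. Since every ordered graph of order n is on the canonical vertex
set with the natural order, closure under order-preserving isomorphism is automatic.\<close>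
definition hereditary_property :: "ograph set \<Rightarrow> bool" where
  "hereditary_property P \<longleftrightarrow>
     (\<forall>G\<in>P. ordered_graph G) \<and>
     (\<forall>G\<in>P. \<forall>H. ordered_graph H \<and> induced_ordered_subgraph H G \<longrightarrow> H \<in> P)"

definition slice :: "ograph set \<Rightarrow> nat \<Rightarrow> ograph set" where
  "slice P n = {G \<in> P. fst G = n}"

end

theory Submission
  imports Defs
begin


fun wordof :: "nat \<Rightarrow> (nat \<times> nat) list \<Rightarrow> (nat \<times> nat) list" where
  "wordof q [] = []"
| "wordof q (p # ps) = replicate (fst p) (snd p, q) @ wordof (Suc q) ps"

lemma wordof_length: "length (wordof q ps) = sum_list (map fst ps)"
  by (induction ps arbitrary: q) auto

lemma wordof_snd_ge: "x \<in> set (wordof q ps) \<Longrightarrow> q \<le> snd x"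
  by (induction ps arbitrary: q) (auto dest!: Suc_leD)

lemma wordof_append: "wordof q (xs @ ys) = wordof q xs @ wordof (q + length xs) ys"
  by (induction xs arbitrary: q) auto

definition gr :: "(nat \<times> nat) list \<Rightarrow> ograph" where
  "gr w = (length w, {(i,j). i < j \<and> j < length w \<and>
            (snd (w!i) = snd (w!j) \<or> fst (w!i) < fst (w!j))})"

definition VW :: "nat \<Rightarrow> (nat \<Rightarrow> nat) \<Rightarrow> (nat \<times> nat) list \<Rightarrow> bool" where
  "VW k a w \<longleftrightarrow>
    (\<forall>i j l. i \<le> j \<and> j \<le> l \<and> l < length w \<and> snd (w!i) = snd (w!l) \<longrightarrow> snd (w!j) = snd (w!i)) \<and>
    (\<forall>i j. i < length w \<and> j < length w \<and> snd (w!i) = snd (w!j) \<longrightarrow> fst (w!i) = fst (w!j)) \<and>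
    (\<forall>i < length w. 1 \<le> fst (w!i) \<and>
        card {j. j < length w \<and> snd (w!j) = snd (w!i)} \<le> k+1 \<and>
        fst (w!i) \<le> a (k + 1 - card {j. j < length w \<and> snd (w!j) = snd (w!i)}))"

definition goodp :: "nat \<Rightarrow> (nat \<Rightarrow> nat) \<Rightarrow> nat \<times> nat \<Rightarrow> bool" where
  "goodp k a p \<longleftrightarrow> 1 \<le> fst p \<and> fst p \<le> k+1 \<and> 1 \<le> snd p \<and> snd p \<le> a (k + 1 - fst p)"

definition Parses :: "nat \<Rightarrow> (nat \<Rightarrow> nat) \<Rightarrow> nat \<Rightarrow> (nat \<times> nat) list set" where
  "Parses k a n = {ps. (\<forall>p\<in>set ps. goodp k a p) \<and> sum_list (map fst ps) = n}"

lemma VW_cons: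
  assumes r: "VW k a r" and gt: "\<forall>x\<in>set r. q < snd x" and g: "goodp k a (L, s)"
  shows "VW k a (replicate L (s, q) @ r)"
proof -
  let ?w = "replicate L (s, q) @ r"
  have nth1: "i < L \<Longrightarrow> ?w ! i = (s, q)" for i by (simp add: nth_append)
  have nth2: "L \<le> i \<Longrightarrow> ?w ! i = r ! (i - L)" for i by (simp add: nth_append)
  have len: "length ?w = L + length r" by simp
  have gtn: "j < length r \<Longrightarrow> q < snd (r ! j)" for j using gt nth_mem by blast
  have sq: "i < length ?w \<Longrightarrow> snd (?w ! i) = q \<longleftrightarrow> i < L" for i
  proof (cases "i < L")
    case True then show ?thesis using nth1 by simp
  next
    case False
    assume "i < length ?w"
    then have "i - L < length r" using False by simp
    then show ?thesis using gtn[of "i - L"] nth2[of i] False by simp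
  qed
  have S1: "{j. j < length ?w \<and> snd (?w!j) = q} = {..<L}"
    using sq len by auto
  have S2: "{j. j < length ?w \<and> snd (?w!j) = snd (r ! i')} = (\<lambda>j. j + L) ` {j. j < length r \<and> snd (r!j) = snd (r ! i')}"
    if "i' < length r" for i'
  proof -
    have "x \<in> (\<lambda>j. j + L) ` {j. j < length r \<and> snd (r!j) = snd (r ! i')}"
      if "x < length ?w" "snd (?w!x) = snd (r ! i')" for x
    proof -
      have "\<not> x < L" using that nth1 gtn[OF \<open>i' < length r\<close>] by auto
      then show ?thesis using that nth2
        by (auto intro!: image_eqI[where x="x - L"])
    qed
    moreover have "x + L < length ?w \<and> snd (?w!(x+L)) = snd (r ! i')"
      if "x < length r" "snd (r!x) = snd (r ! i')" for x using that nth2 by auto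
    ultimately show ?thesis by blast
  qed
  have rc: "card {j. j < length ?w \<and> snd (?w!j) = snd (r ! i')} = card {j. j < length r \<and> snd (r!j) = snd (r ! i')}"
    if "i' < length r" for i'
    unfolding S2[OF that] by (rule card_image) (simp add: inj_on_def)
  from r have r1: "\<forall>i j l. i \<le> j \<and> j \<le> l \<and> l < length r \<and> snd (r!i) = snd (r!l) \<longrightarrow> snd (r!j) = snd (r!i)"
    and r2: "\<forall>i j. i < length r \<and> j < length r \<and> snd (r!i) = snd (r!j) \<longrightarrow> fst (r!i) = fst (r!j)"
    and r3: "\<forall>i < length r. 1 \<le> fst (r!i) \<and>
        card {j. j < length r \<and> snd (r!j) = snd (r!i)} \<le> k+1 \<and>
        fst (r!i) \<le> a (k + 1 - card {j. j < length r \<and> snd (r!j) = snd (r!i)})"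
    unfolding VW_def by blast+
  have c1: "\<forall>i j l. i \<le> j \<and> j \<le> l \<and> l < length ?w \<and> snd (?w!i) = snd (?w!l) \<longrightarrow> snd (?w!j) = snd (?w!i)"
  proof (intro allI impI)
    fix i j l assume h: "i \<le> j \<and> j \<le> l \<and> l < length ?w \<and> snd (?w!i) = snd (?w!l)"
    show "snd (?w!j) = snd (?w!i)"
    proof (cases "i < L")
      case True
      have "snd (?w!l) = q" using h nth1[OF True] by simp
      then have "l < L" using h sq[of l] by blast
      then show ?thesis using h True nth1 by auto
    next
      case False
      have a1: "i - L \<le> j - L" "j - L \<le> l - L" "l - L < length r" using h False by auto
      have e: "snd (r!(i-L)) = snd (r!(l-L))" using h False nth2 by auto
      have "snd (r!(j-L)) = snd (r!(i-L))" using r1 a1 e by blast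
      then show ?thesis using h False nth2 by auto
    qed
  qed
  have c2: "\<forall>i j. i < length ?w \<and> j < length ?w \<and> snd (?w!i) = snd (?w!j) \<longrightarrow> fst (?w!i) = fst (?w!j)"
  proof (intro allI impI)
    fix i j assume h: "i < length ?w \<and> j < length ?w \<and> snd (?w!i) = snd (?w!j)"
    show "fst (?w!i) = fst (?w!j)"
    proof (cases "i < L")
      case True
      have "snd (?w!j) = q" using h nth1[OF True] by simp
      then have "j < L" using h sq[of j] by blast
      then show ?thesis using True nth1 by auto
    next
      case False
      have "snd (?w!i) \<noteq> q" using sq[of i] h False by blast
      then have "\<not> j < L" using h nth1 by auto
      then have a1: "i - L < length r" "j - L < length r" using h False by auto
      have e: "snd (r!(i-L)) = snd (r!(j-L))" using h False \<open>\<not> j < L\<close> nth2 by auto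
      have "fst (r!(i-L)) = fst (r!(j-L))" using r2 a1 e by blast
      then show ?thesis using False \<open>\<not> j < L\<close> nth2 by auto
    qed
  qed
  have c3: "\<forall>i < length ?w. 1 \<le> fst (?w!i) \<and>
        card {j. j < length ?w \<and> snd (?w!j) = snd (?w!i)} \<le> k+1 \<and>
        fst (?w!i) \<le> a (k + 1 - card {j. j < length ?w \<and> snd (?w!j) = snd (?w!i)})"
  proof (intro allI impI)
    fix i assume h: "i < length ?w"
    show "1 \<le> fst (?w!i) \<and>
        card {j. j < length ?w \<and> snd (?w!j) = snd (?w!i)} \<le> k+1 \<and>
        fst (?w!i) \<le> a (k + 1 - card {j. j < length ?w \<and> snd (?w!j) = snd (?w!i)})"
    proof (cases "i < L")
      case True
      then show ?thesis using nth1[OF True] S1 g unfolding goodp_def by simp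
    next
      case False
      then have i': "i - L < length r" using h by simp
      show ?thesis using nth2[of i] False rc[OF i'] r3[rule_format, OF i'] by simp
    qed
  qed
  show ?thesis unfolding VW_def using c1 c2 c3 by blast
qed

lemma VW_nil: "VW k a []" by (simp add: VW_def)

lemma VW_wordof: "\<forall>p\<in>set ps. goodp k a p \<Longrightarrow> VW k a (wordof q ps)"
proof (induction ps arbitrary: q)
  case Nil then show ?case by (simp add: VW_nil)
next
  case (Cons p ps)
  have "\<forall>x\<in>set (wordof (Suc q) ps). q < snd x" using wordof_snd_ge by fastforce
  then show ?case using Cons VW_cons[of k a "wordof (Suc q) ps" q "fst p" "snd p"] by simp
qed



lemma VW_sub:
  assumes w: "VW k a w" and mono: "\<forall>i j. i \<le> j \<and> j \<le> k \<longrightarrow> a i \<le> a j"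
    and f: "\<forall>i j. i < j \<and> j < n \<longrightarrow> f i < f j" and fr: "\<forall>i<n. f i < length w"
  shows "VW k a (map (\<lambda>i. w!(f i)) [0..<n])"
proof -
  let ?v = "map (\<lambda>i. w!(f i)) [0..<n]"
  have vn: "i < n \<Longrightarrow> ?v ! i = w ! (f i)" for i by simp
  have vl: "length ?v = n" by simp
  have fle: "f i \<le> f j" if "i \<le> j" "j < n" for i j
  proof (cases "i = j")
    case True then show ?thesis by simp
  next
    case False then have "i < j" using that by simp
    then have "f i < f j" using f that by blast
    then show ?thesis by simp
  qed
  from w have r1: "\<forall>i j l. i \<le> j \<and> j \<le> l \<and> l < length w \<and> snd (w!i) = snd (w!l) \<longrightarrow> snd (w!j) = snd (w!i)"
    and r2: "\<forall>i j. i < length w \<and> j < length w \<and> snd (w!i) = snd (w!j) \<longrightarrow> fst (w!i) = fst (w!j)"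
    and r3: "\<forall>i < length w. 1 \<le> fst (w!i) \<and>
        card {j. j < length w \<and> snd (w!j) = snd (w!i)} \<le> k+1 \<and>
        fst (w!i) \<le> a (k + 1 - card {j. j < length w \<and> snd (w!j) = snd (w!i)})"
    unfolding VW_def by blast+
  have c1: "\<forall>i j l. i \<le> j \<and> j \<le> l \<and> l < length ?v \<and> snd (?v!i) = snd (?v!l) \<longrightarrow> snd (?v!j) = snd (?v!i)"
  proof (intro allI impI)
    fix i j l assume h: "i \<le> j \<and> j \<le> l \<and> l < length ?v \<and> snd (?v!i) = snd (?v!l)"
    then have "f i \<le> f j" "f j \<le> f l" "f l < length w" using fle[of i j] fle[of j l] fr by auto
    moreover have "snd (w!(f i)) = snd (w!(f l))" using h by auto
    ultimately have "snd (w!(f j)) = snd (w!(f i))" using r1 by blast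
    then show "snd (?v!j) = snd (?v!i)" using h by auto
  qed
  have c2: "\<forall>i j. i < length ?v \<and> j < length ?v \<and> snd (?v!i) = snd (?v!j) \<longrightarrow> fst (?v!i) = fst (?v!j)"
  proof (intro allI impI)
    fix i j assume h: "i < length ?v \<and> j < length ?v \<and> snd (?v!i) = snd (?v!j)"
    then have "f i < length w" "f j < length w" "snd (w!(f i)) = snd (w!(f j))" using fr by auto
    then have "fst (w!(f i)) = fst (w!(f j))" using r2 by blast
    then show "fst (?v!i) = fst (?v!j)" using h by auto
  qed
  have c3: "\<forall>i < length ?v. 1 \<le> fst (?v!i) \<and>
        card {j. j < length ?v \<and> snd (?v!j) = snd (?v!i)} \<le> k+1 \<and>
        fst (?v!i) \<le> a (k + 1 - card {j. j < length ?v \<and> snd (?v!j) = snd (?v!i)})"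
  proof (intro allI impI)
    fix i assume h: "i < length ?v"
    then have i: "i < n" by simp
    let ?S = "{j. j < length w \<and> snd (w!j) = snd (w!(f i))}"
    let ?T = "{j. j < length ?v \<and> snd (?v!j) = snd (?v!i)}"
    have T: "?T = {j. j < n \<and> snd (w!(f j)) = snd (w!(f i))}" using i by auto
    have inj: "inj_on f ?T"
    proof (rule inj_onI)
      fix x y assume "x \<in> ?T" "y \<in> ?T" "f x = f y"
      then have "x < n" "y < n" by auto
      show "x = y"
      proof (rule ccontr)
        assume "x \<noteq> y"
        then have "x < y \<or> y < x" by auto
        then show False using f \<open>x < n\<close> \<open>y < n\<close> \<open>f x = f y\<close> by (metis order_less_irrefl)
      qed
    qed
    have sub: "f ` ?T \<subseteq> ?S" unfolding T using fr by auto
    have "card ?T \<le> card ?S" using card_inj_on_le[OF inj sub] by simp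
    moreover have "1 \<le> card ?T"
    proof -
      have "finite ?T" by simp
      moreover have "i \<in> ?T" using h by simp
      ultimately have "card ?T > 0" using card_gt_0_iff by blast
      then show ?thesis by simp
    qed
    moreover have fi: "f i < length w" using fr i by simp
    ultimately have "k + 1 - card ?S \<le> k + 1 - card ?T \<and> k + 1 - card ?T \<le> k" by linarith
    then have "a (k + 1 - card ?S) \<le> a (k + 1 - card ?T)"
      using mono by blast
    moreover have "1 \<le> fst (w!(f i)) \<and> card ?S \<le> k+1 \<and> fst (w!(f i)) \<le> a (k + 1 - card ?S)"
      using r3[rule_format, OF fi] by simp
    ultimately show "1 \<le> fst (?v!i) \<and> card ?T \<le> k+1 \<and> fst (?v!i) \<le> a (k + 1 - card ?T)"
      using vn[OF i] \<open>card ?T \<le> card ?S\<close> by simp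
  qed
  show ?thesis unfolding VW_def using c1 c2 c3 by blast
qed

lemma gr_sub:
  assumes H: "ordered_graph H" and f: "\<forall>i j. i < j \<and> j < fst H \<longrightarrow> f i < f j"
    and fr: "\<forall>i<fst H. f i < length w"
    and adj: "\<forall>i j. i < j \<and> j < fst H \<longrightarrow> ((i,j) \<in> snd H \<longleftrightarrow> (f i, f j) \<in> snd (gr w))"
  shows "H = gr (map (\<lambda>i. w!(f i)) [0..<fst H])"
proof -
  obtain n E where HE: "H = (n, E)" by (cases H)
  have Esub: "E \<subseteq> {(i,j). i < j \<and> j < n}" using H HE unfolding ordered_graph_def by simp
  have "E = snd (gr (map (\<lambda>i. w!(f i)) [0..<n]))"
  proof (rule set_eqI)
    fix x show "x \<in> E \<longleftrightarrow> x \<in> snd (gr (map (\<lambda>i. w!(f i)) [0..<n]))"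
    proof (cases x)
      case (Pair i j)
      show ?thesis
      proof (cases "i < j \<and> j < n")
        case True
        then have fij: "f i < f j" "f j < length w" using f fr HE by auto
        have "(i,j) \<in> E \<longleftrightarrow> (f i, f j) \<in> snd (gr w)" using adj True HE by auto
        also have "\<dots> \<longleftrightarrow> (snd (w!(f i)) = snd (w!(f j)) \<or> fst (w!(f i)) < fst (w!(f j)))"
          using fij by (simp add: gr_def)
        also have "\<dots> \<longleftrightarrow> (i,j) \<in> snd (gr (map (\<lambda>i. w!(f i)) [0..<n]))"
          using True by (simp add: gr_def)
        finally show ?thesis using Pair by simp
      next
        case False
        then show ?thesis using Esub Pair by (auto simp: gr_def)
      qed
    qed
  qed
  then show ?thesis using HE by (simp add: gr_def)
qed



definition eqv :: "(nat \<times> nat) list \<Rightarrow> (nat \<times> nat) list \<Rightarrow> bool" where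
  "eqv u w \<longleftrightarrow> length u = length w \<and> (\<forall>i<length u. fst (u!i) = fst (w!i)) \<and>
     (\<forall>i j. i < length u \<and> j < length u \<longrightarrow> (snd (u!i) = snd (u!j) \<longleftrightarrow> snd (w!i) = snd (w!j)))"

lemma eqv_gr: assumes "eqv u w" shows "gr u = gr w"
proof -
  have l: "length u = length w" using assms eqv_def by blast
  have "{(i,j). i < j \<and> j < length u \<and> (snd (u!i) = snd (u!j) \<or> fst (u!i) < fst (u!j))}
      = {(i,j). i < j \<and> j < length w \<and> (snd (w!i) = snd (w!j) \<or> fst (w!i) < fst (w!j))}"
  proof (rule set_eqI)
    fix x show "x \<in> {(i,j). i < j \<and> j < length u \<and> (snd (u!i) = snd (u!j) \<or> fst (u!i) < fst (u!j))}
      \<longleftrightarrow> x \<in> {(i,j). i < j \<and> j < length w \<and> (snd (w!i) = snd (w!j) \<or> fst (w!i) < fst (w!j))}"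
    proof (cases x)
      case (Pair i j)
      show ?thesis
      proof (cases "i < j \<and> j < length u")
        case True
        then have "i < length u" by simp
        have e1: "fst (u!i) = fst (w!i)" "fst (u!j) = fst (w!j)" using assms True \<open>i < length u\<close> unfolding eqv_def by blast+
        have e2: "snd (u!i) = snd (u!j) \<longleftrightarrow> snd (w!i) = snd (w!j)" using assms True \<open>i < length u\<close> unfolding eqv_def by blast
        show ?thesis using Pair True e1 e2 l by simp
      next
        case False then show ?thesis using Pair l by auto
      qed
    qed
  qed
  then show ?thesis unfolding gr_def using l by simp
qed

lemma extract_parse:
  assumes "VW k a w" and mono: "\<forall>i j. i \<le> j \<and> j \<le> k \<longrightarrow> a i \<le> a j"
  shows "\<exists>ps\<in>Parses k a (length w). eqv (wordof q ps) w"
  using assms(1)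
proof (induction "length w" arbitrary: w q rule: less_induct)
  case less
  show ?case
  proof (cases "w = []")
    case True
    have "[] \<in> Parses k a (length w)" using True by (simp add: Parses_def)
    moreover have "eqv (wordof q []) w" using True by (simp add: eqv_def)
    ultimately show ?thesis by blast
  next
    case False
    then have len0: "0 < length w" by simp
    from less.prems have r1: "\<forall>i j l. i \<le> j \<and> j \<le> l \<and> l < length w \<and> snd (w!i) = snd (w!l) \<longrightarrow> snd (w!j) = snd (w!i)"
      and r2: "\<forall>i j. i < length w \<and> j < length w \<and> snd (w!i) = snd (w!j) \<longrightarrow> fst (w!i) = fst (w!j)"
      and r3: "\<forall>i < length w. 1 \<le> fst (w!i) \<and>
        card {j. j < length w \<and> snd (w!j) = snd (w!i)} \<le> k+1 \<and>
        fst (w!i) \<le> a (k + 1 - card {j. j < length w \<and> snd (w!j) = snd (w!i)})"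
      unfolding VW_def by blast+
    define S where "S = {j. j < length w \<and> snd (w!j) = snd (w!0)}"
    define C where "C = card S"
    define s0 where "s0 = fst (w!0)"
    have down: "j \<in> S" if "l \<in> S" "j \<le> l" for j l
    proof -
      have "0 \<le> j \<and> j \<le> l \<and> l < length w \<and> snd (w!0) = snd (w!l)" using that unfolding S_def by auto
      then have "snd (w!j) = snd (w!0)" using r1 by blast
      then show ?thesis using that unfolding S_def by auto
    qed
    have finS: "finite S" unfolding S_def by simp
    have SC: "S = {..<C}"
    proof (rule set_eqI)
      fix x
      show "x \<in> S \<longleftrightarrow> x \<in> {..<C}"
      proof
        assume "x \<in> S"
        then have "{..x} \<subseteq> S" using down by auto
        then have "card {..x} \<le> C" unfolding C_def using finS card_mono by blast
        then show "x \<in> {..<C}" by simp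
      next
        assume "x \<in> {..<C}"
        show "x \<in> S"
        proof (rule ccontr)
          assume "x \<notin> S"
          then have "S \<subseteq> {..<x}" using down by (metis lessThan_iff linorder_not_less subsetI)
          then have "C \<le> x" unfolding C_def by (metis card_lessThan card_mono finite_lessThan)
          then show False using \<open>x \<in> {..<C}\<close> by simp
        qed
      qed
    qed
    have "0 \<in> S" unfolding S_def using len0 by simp
    then have C1: "1 \<le> C" using SC by simp
    have CL: "C \<le> length w" unfolding C_def S_def by (metis (no_types, lifting) card_mono finite_lessThan lessThan_iff mem_Collect_eq subsetI card_lessThan)
    have r30: "1 \<le> s0 \<and> C \<le> k+1 \<and> s0 \<le> a (k + 1 - C)"
      using r3 len0 unfolding s0_def C_def S_def by blast
    define w' where "w' = drop C w"
    have w'eq: "w' = map (\<lambda>i. w!(i + C)) [0..<length w - C]"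
      unfolding w'_def by (rule nth_equalityI) (auto simp: add.commute)
    have VW': "VW k a w'"
      unfolding w'eq by (rule VW_sub[OF less.prems mono]) auto
    have lw': "length w' < length w" unfolding w'_def using C1 len0 by simp
    obtain ps' where ps': "ps' \<in> Parses k a (length w')" and eq': "eqv (wordof (Suc q) ps') w'"
      using less.hyps[OF lw' VW'] by blast
    let ?u = "replicate C (s0, q) @ wordof (Suc q) ps'"
    have u_eq: "wordof q ((C, s0) # ps') = ?u" by simp
    have lwf: "length (wordof (Suc q) ps') = length w - C" using eq' unfolding eqv_def w'_def by simp
    have un1: "i < C \<Longrightarrow> ?u ! i = (s0, q)" for i by (simp add: nth_append)
    have un2: "C \<le> i \<Longrightarrow> ?u ! i = wordof (Suc q) ps' ! (i - C)" for i by (simp add: nth_append)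
    have wgt: "i < length w - C \<Longrightarrow> q < snd (wordof (Suc q) ps' ! i)" for i
      using wordof_snd_ge[of "wordof (Suc q) ps' ! i" "Suc q" ps'] lwf by (simp add: Suc_le_eq)
    have w'n: "i < length w - C \<Longrightarrow> w' ! i = w ! (i + C)" for i unfolding w'eq by simp
    have eqf: "i < length w - C \<Longrightarrow> fst (wordof (Suc q) ps' ! i) = fst (w' ! i)" for i
      using eq' lwf unfolding eqv_def by simp
    have eqs: "i < length w - C \<Longrightarrow> j < length w - C \<Longrightarrow>
        (snd (wordof (Suc q) ps' ! i) = snd (wordof (Suc q) ps' ! j) \<longleftrightarrow> snd (w'!i) = snd (w'!j))" for i j
      using eq' lwf unfolding eqv_def by simp
    have inS: "i < length w \<Longrightarrow> (snd (w!i) = snd (w!0) \<longleftrightarrow> i < C)" for i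
      using SC unfolding S_def by blast
    have "eqv ?u w"
      unfolding eqv_def
    proof (intro conjI allI impI)
      show "length ?u = length w" using lwf CL by simp
    next
      fix i assume "i < length ?u"
      then have i: "i < length w" using lwf CL by simp
      show "fst (?u!i) = fst (w!i)"
      proof (cases "i < C")
        case True
        then have "snd (w!i) = snd (w!0)" using inS i by blast
        then have "fst (w!i) = fst (w!0)" using r2 i len0 by blast
        then show ?thesis using un1[OF True] s0_def by simp
      next
        case False
        then show ?thesis using un2[of i] eqf[of "i - C"] w'n[of "i - C"] i by simp
      qed
    next
      fix i j assume h: "i < length ?u \<and> j < length ?u"
      then have i: "i < length w" and j: "j < length w" using lwf CL by auto
      show "snd (?u!i) = snd (?u!j) \<longleftrightarrow> snd (w!i) = snd (w!j)"
      proof (cases "i < C")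
        case True
        note it = True
        show ?thesis
        proof (cases "j < C")
          case True
          then show ?thesis using it inS i j un1 by metis
        next
          case False
          have "j - C < length w - C" using False j by simp
          then have "snd (?u!j) \<noteq> q" using un2[of j] wgt[of "j - C"] False by simp
          moreover have "snd (w!j) \<noteq> snd (w!0)" using inS j False by blast
          ultimately show ?thesis using un1[OF it] inS[OF i] it by simp
        qed
      next
        case False
        note it = False
        show ?thesis
        proof (cases "j < C")
          case True
          have "i - C < length w - C" using it i by simp
          then have "snd (?u!i) \<noteq> q" using un2[of i] wgt[of "i - C"] it by simp
          moreover have "snd (w!i) \<noteq> snd (w!0)" using inS i it by blast
          ultimately show ?thesis using un1[OF True] inS[OF j] True by simp
        next
          case False
          then show ?thesis using it un2[of i] un2[of j] eqs[of "i - C" "j - C"] w'n[of "i - C"] w'n[of "j - C"] i j by simp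
        qed
      qed
    qed
    moreover have "(C, s0) # ps' \<in> Parses k a (length w)"
      using ps' r30 C1 lwf CL lw' eq' unfolding Parses_def goodp_def eqv_def by auto
    ultimately show ?thesis using u_eq by metis
  qed
qed



lemma wordof_fst:
  assumes "\<forall>p\<in>set ps. goodp k a p" and mono: "\<forall>i j. i \<le> j \<and> j \<le> k \<longrightarrow> a i \<le> a j"
    and "x \<in> set (wordof q ps)"
  shows "1 \<le> fst x \<and> fst x \<le> a k"
  using assms(1,3)
proof (induction ps arbitrary: q)
  case Nil then show ?case by simp
next
  case (Cons p ps)
  show ?case
  proof (cases "x \<in> set (wordof (Suc q) ps)")
    case True then show ?thesis using Cons by simp
  next
    case False
    then have x: "x = (snd p, q)" using Cons.prems by (auto split: if_splits)
    have g: "goodp k a p" using Cons.prems by simp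
    then have "a (k + 1 - fst p) \<le> a k" using mono unfolding goodp_def by auto
    then show ?thesis using g x unfolding goodp_def by simp
  qed
qed

lemma eqv_inj:
  assumes "\<forall>p\<in>set ps. goodp k a p" "\<forall>p\<in>set ps'. goodp k a p"
    and "eqv (wordof q ps) (wordof q ps')"
  shows "ps = ps'"
  using assms
proof (induction ps arbitrary: ps' q)
  case Nil
  then have "length (wordof q ps') = 0" unfolding eqv_def by simp
  then have "sum_list (map fst ps') = 0" by (simp add: wordof_length)
  then show ?case using Nil.prems(2) unfolding goodp_def by (cases ps') auto
next
  case (Cons p r)
  obtain L s where p: "p = (L, s)" by (cases p)
  have L1: "1 \<le> L" using Cons.prems(1) p unfolding goodp_def by auto
  have "length (wordof q ps') = length (wordof q (p # r))" using Cons.prems(3) unfolding eqv_def by simp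
  then have "ps' \<noteq> []" using L1 p by auto
  then obtain L' s' r' where ps': "ps' = (L', s') # r'" by (metis list.exhaust prod.exhaust)
  have L1': "1 \<le> L'" using Cons.prems(2) ps' unfolding goodp_def by auto
  let ?u = "replicate L (s, q) @ wordof (Suc q) r"
  let ?u' = "replicate L' (s', q) @ wordof (Suc q) r'"
  have E: "eqv ?u ?u'" using Cons.prems(3) p ps' by simp
  have lu: "length ?u = length ?u'" using E unfolding eqv_def by blast
  have sq: "i < length ?u \<Longrightarrow> snd (?u ! i) = q \<longleftrightarrow> i < L" for i
  proof (cases "i < L")
    case True then show ?thesis by (simp add: nth_append)
  next
    case False
    assume "i < length ?u"
    then have "?u ! i \<in> set (wordof (Suc q) r)" using False by (simp add: nth_append)
    then have "Suc q \<le> snd (?u ! i)" using wordof_snd_ge by blast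
    then show ?thesis using False by simp
  qed
  have sq': "i < length ?u' \<Longrightarrow> snd (?u' ! i) = q \<longleftrightarrow> i < L'" for i
  proof (cases "i < L'")
    case True then show ?thesis by (simp add: nth_append)
  next
    case False
    assume "i < length ?u'"
    then have "?u' ! i \<in> set (wordof (Suc q) r')" using False by (simp add: nth_append)
    then have "Suc q \<le> snd (?u' ! i)" using wordof_snd_ge by blast
    then show ?thesis using False by simp
  qed
  have pat: "i < length ?u \<Longrightarrow> j < length ?u \<Longrightarrow> (snd (?u!i) = snd (?u!j) \<longleftrightarrow> snd (?u'!i) = snd (?u'!j))" for i j
    using E unfolding eqv_def by blast
  have fs: "i < length ?u \<Longrightarrow> fst (?u!i) = fst (?u'!i)" for i
    using E unfolding eqv_def by blast
  have l0: "0 < length ?u" using L1 by simp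
  have "s = s'" using fs[OF l0] L1 L1' by (simp add: nth_append)
  have "L = L'"
  proof (rule ccontr)
    assume "L \<noteq> L'"
    then consider "L < L'" | "L' < L" by linarith
    then show False
    proof cases
      case 1
      then have "L < length ?u" using lu by simp
      then show False using pat[OF \<open>L < length ?u\<close> l0] sq[of L] sq[of 0] sq'[of L] sq'[of 0] 1 L1 L1' lu by auto
    next
      case 2
      then have "L' < length ?u" by simp
      have l0': "0 < length ?u'" using L1' by simp
      have "L' < length ?u'" using lu \<open>L' < length ?u\<close> by simp
      then have b: "snd (?u'!L') \<noteq> q" using sq'[of L'] by simp
      have a: "snd (?u!L') = q" using sq[OF \<open>L' < length ?u\<close>] 2 by simp
      have c: "snd (?u!0) = q" "snd (?u'!0) = q" using sq[OF l0] sq'[OF l0'] L1 L1' by auto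
      show False using pat[OF \<open>L' < length ?u\<close> l0] a b c by simp
    qed
  qed
  have "eqv (wordof (Suc q) r) (wordof (Suc q) r')"
    unfolding eqv_def
  proof (intro conjI allI impI)
    show "length (wordof (Suc q) r) = length (wordof (Suc q) r')" using lu \<open>L = L'\<close> by simp
  next
    fix i assume "i < length (wordof (Suc q) r)"
    then have "L + i < length ?u" by simp
    then show "fst (wordof (Suc q) r ! i) = fst (wordof (Suc q) r' ! i)"
      using fs[of "L + i"] \<open>L = L'\<close> by (simp add: nth_append)
  next
    fix i j assume "i < length (wordof (Suc q) r) \<and> j < length (wordof (Suc q) r)"
    then have "L + i < length ?u" "L + j < length ?u" by auto
    then show "snd (wordof (Suc q) r ! i) = snd (wordof (Suc q) r ! j) \<longleftrightarrow> snd (wordof (Suc q) r' ! i) = snd (wordof (Suc q) r' ! j)"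
      using pat[of "L + i" "L + j"] \<open>L = L'\<close> by (simp add: nth_append)
  qed
  then have "r = r'" using Cons.IH Cons.prems ps' by simp
  then show ?case using p ps' \<open>s = s'\<close> \<open>L = L'\<close> by simp
qed

definition gadget :: "nat \<Rightarrow> (nat \<times> nat) list" where
  "gadget m = map (\<lambda>u. (1, u + 1)) [0..<m]"

lemma wordof_gadget: "wordof q (gadget m) = map (\<lambda>u. (u + 1, q + u)) [0..<m]"
  by (induction m) (simp_all add: gadget_def wordof_append)

lemma gadget_good: "\<forall>p\<in>set (gadget (a k)). goodp k a p"
  by (auto simp: gadget_def goodp_def)



lemma W_split: "wordof 0 (gadget m @ ps) = map (\<lambda>u. (u + 1, u)) [0..<m] @ wordof m ps"
proof -
  have "length (gadget m) = m" by (simp add: gadget_def)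
  then show ?thesis by (simp add: wordof_append wordof_gadget)
qed

lemma W_props:
  assumes mono: "\<forall>i j. i \<le> j \<and> j \<le> k \<longrightarrow> a i \<le> a j"
    and ps: "ps \<in> Parses k a n"
  defines "W \<equiv> wordof 0 (gadget (a k) @ ps)" and "v \<equiv> wordof (a k) ps"
  shows "length v = n"
    and "\<And>i u. i < n \<Longrightarrow> u < a k \<Longrightarrow> (u, a k + i) \<in> snd (gr W) \<longleftrightarrow> u + 1 < fst (v!i)"
    and "\<And>i j. i < j \<Longrightarrow> j < n \<Longrightarrow> (a k + i, a k + j) \<in> snd (gr W) \<longleftrightarrow> (snd (v!i) = snd (v!j) \<or> fst (v!i) < fst (v!j))"
    and "\<And>i. i < n \<Longrightarrow> 1 \<le> fst (v!i) \<and> fst (v!i) \<le> a k"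
    and "\<And>i. i < n \<Longrightarrow> a k \<le> snd (v!i)"
    and "VW k a v"
proof -
  have g: "\<forall>p\<in>set ps. goodp k a p" and sl: "sum_list (map fst ps) = n" using ps unfolding Parses_def by auto
  show lv: "length v = n" unfolding v_def using sl by (simp add: wordof_length)
  have WW: "W = map (\<lambda>u. (u + 1, u)) [0..<a k] @ v" unfolding W_def v_def by (rule W_split)
  have lW: "length W = a k + n" using WW lv by simp
  have Wu: "u < a k \<Longrightarrow> W ! u = (u + 1, u)" for u unfolding WW by (simp add: nth_append)
  have Wv: "W ! (a k + i) = v ! i" for i unfolding WW by (simp add: nth_append)
  show fb: "1 \<le> fst (v!i) \<and> fst (v!i) \<le> a k" if "i < n" for i
    using wordof_fst[OF g mono, of "v!i" "a k"] that lv unfolding v_def by simp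
  show sb: "a k \<le> snd (v!i)" if "i < n" for i
    using wordof_snd_ge[of "v!i" "a k" ps] that lv unfolding v_def by simp
  show "(u, a k + i) \<in> snd (gr W) \<longleftrightarrow> u + 1 < fst (v!i)" if "i < n" "u < a k" for i u
    using that Wu[OF that(2)] Wv[of i] sb[OF that(1)] lW unfolding gr_def by auto
  show "(a k + i, a k + j) \<in> snd (gr W) \<longleftrightarrow> (snd (v!i) = snd (v!j) \<or> fst (v!i) < fst (v!j))"
    if "i < j" "j < n" for i j
    using that Wv[of i] Wv[of j] lW unfolding gr_def by auto
  show "VW k a v" unfolding v_def by (rule VW_wordof[OF g])
qed

lemma decode:
  assumes mono: "\<forall>i j. i \<le> j \<and> j \<le> k \<longrightarrow> a i \<le> a j"
    and ps: "ps \<in> Parses k a n" and ps': "ps' \<in> Parses k a n"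
    and eq: "gr (wordof 0 (gadget (a k) @ ps)) = gr (wordof 0 (gadget (a k) @ ps'))"
  shows "ps = ps'"
proof -
  let ?m = "a k"
  let ?W = "wordof 0 (gadget (a k) @ ps)"
  let ?v = "wordof (a k) ps"
  let ?v' = "wordof (a k) ps'"
  note P = W_props[OF mono ps] and P' = W_props[OF mono ps']
  have fsteq: "fst (?v!i) = fst (?v'!i)" if i: "i < n" for i
  proof -
    have st: "{u. u < ?m \<and> u + 1 < f} = {..< f - 1}" if "1 \<le> f" "f \<le> ?m" for f
      using that by auto
    have "{u. u < ?m \<and> (u, ?m + i) \<in> snd (gr ?W)} = {u. u < ?m \<and> u + 1 < fst (?v!i)}"
      using P(2)[OF i] by auto
    also have "\<dots> = {..< fst (?v!i) - 1}" using st P(4)[OF i] by blast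
    finally have A: "card {u. u < ?m \<and> (u, ?m + i) \<in> snd (gr ?W)} = fst (?v!i) - 1" by simp
    have "{u. u < ?m \<and> (u, ?m + i) \<in> snd (gr ?W)} = {u. u < ?m \<and> u + 1 < fst (?v'!i)}"
      using P'(2)[OF i] eq by auto
    also have "\<dots> = {..< fst (?v'!i) - 1}" using st P'(4)[OF i] by blast
    finally have B: "card {u. u < ?m \<and> (u, ?m + i) \<in> snd (gr ?W)} = fst (?v'!i) - 1" by simp
    show ?thesis using A B P(4)[OF i] P'(4)[OF i] by linarith
  qed
  have pat1: "snd (?v!i) = snd (?v!j) \<longleftrightarrow> snd (?v'!i) = snd (?v'!j)" if "i < j" "j < n" for i j
  proof -
    have "i < n" using that by simp
    have r2: "snd (?v!i) = snd (?v!j) \<Longrightarrow> fst (?v!i) = fst (?v!j)"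
      using P(6) P(1) that \<open>i < n\<close> unfolding VW_def by blast
    have r2': "snd (?v'!i) = snd (?v'!j) \<Longrightarrow> fst (?v'!i) = fst (?v'!j)"
      using P'(6) P'(1) that \<open>i < n\<close> unfolding VW_def by blast
    have "snd (?v!i) = snd (?v!j) \<longleftrightarrow> ((?m + i, ?m + j) \<in> snd (gr ?W) \<and> fst (?v!i) = fst (?v!j))"
      using P(3)[OF that] r2 by auto
    also have "\<dots> \<longleftrightarrow> snd (?v'!i) = snd (?v'!j)"
      using P'(3)[OF that] r2' eq fsteq[OF \<open>i < n\<close>] fsteq[OF that(2)] by auto
    finally show ?thesis .
  qed
  have "eqv ?v ?v'"
    unfolding eqv_def
  proof (intro conjI allI impI)
    show "length ?v = length ?v'" using P(1) P'(1) by simp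
  next
    fix i assume "i < length ?v" then show "fst (?v!i) = fst (?v'!i)" using fsteq P(1) by simp
  next
    fix i j assume h: "i < length ?v \<and> j < length ?v"
    then have "i < n" "j < n" using P(1) by auto
    consider "i < j" | "i = j" | "j < i" by linarith
    then show "snd (?v!i) = snd (?v!j) \<longleftrightarrow> snd (?v'!i) = snd (?v'!j)"
    proof cases
      case 1 then show ?thesis using pat1 \<open>j < n\<close> by blast
    next
      case 2 then show ?thesis by simp
    next
      case 3 then show ?thesis using pat1[OF 3 \<open>i < n\<close>] by metis
    qed
  qed
  then show ?thesis using eqv_inj ps ps' unfolding Parses_def by blast
qed



lemma Parses_0: "Parses k a 0 = {[]}"
proof -
  have "ps = []" if "ps \<in> Parses k a 0" for ps
    using that unfolding Parses_def goodp_def by (cases ps) auto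
  then show ?thesis by (auto simp: Parses_def)
qed

abbreviation Idx :: "nat \<Rightarrow> (nat \<Rightarrow> nat) \<Rightarrow> nat \<Rightarrow> (nat \<times> nat) set" where
  "Idx k a n \<equiv> Sigma {1..min n (k+1)} (\<lambda>L. {1..a (k + 1 - L)})"

lemma Parses_pos:
  assumes "0 < n"
  shows "Parses k a n = (\<Union>x\<in>Idx k a n. Cons x ` Parses k a (n - fst x))"
proof (rule set_eqI)
  fix ps
  show "ps \<in> Parses k a n \<longleftrightarrow> ps \<in> (\<Union>x\<in>Idx k a n. Cons x ` Parses k a (n - fst x))"
  proof
    assume h: "ps \<in> Parses k a n"
    then have "ps \<noteq> []" using assms by (auto simp: Parses_def)
    then obtain p r where ps: "ps = p # r" by (cases ps) auto
    have g: "goodp k a p" and sr: "fst p + sum_list (map fst r) = n" and gr': "\<forall>x\<in>set r. goodp k a x"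
      using h ps unfolding Parses_def by auto
    have "p \<in> Idx k a n" using g sr unfolding goodp_def by (cases p) auto
    moreover have "r \<in> Parses k a (n - fst p)" using gr' sr unfolding Parses_def by auto
    ultimately show "ps \<in> (\<Union>x\<in>Idx k a n. Cons x ` Parses k a (n - fst x))" using ps by blast
  next
    assume "ps \<in> (\<Union>x\<in>Idx k a n. Cons x ` Parses k a (n - fst x))"
    then obtain p r where p: "p \<in> Idx k a n" and r: "r \<in> Parses k a (n - fst p)" and ps: "ps = p # r" by blast
    have "goodp k a p" using p unfolding goodp_def by auto
    moreover have "fst p \<le> n" using p by auto
    ultimately show "ps \<in> Parses k a n" using r ps unfolding Parses_def by auto
  qed
qed

lemma finite_Parses: "finite (Parses k a n)"
proof (induction n rule: less_induct)
  case (less n)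
  show ?case
  proof (cases "n = 0")
    case True then show ?thesis by (simp add: Parses_0)
  next
    case False
    have "finite (Idx k a n)" by simp
    moreover have "\<forall>x\<in>Idx k a n. finite (Cons x ` Parses k a (n - fst x))"
      using less False by auto
    ultimately show ?thesis using Parses_pos[of n k a] False by simp
  qed
qed

lemma card_Parses:
  assumes "0 < n"
  shows "card (Parses k a n) = (\<Sum>L\<in>{1..min n (k+1)}. a (k + 1 - L) * card (Parses k a (n - L)))"
proof -
  have "card (Parses k a n) = (\<Sum>x\<in>Idx k a n. card (Cons x ` Parses k a (n - fst x)))"
    unfolding Parses_pos[OF assms]
    by (rule card_UN_disjoint) (auto simp: finite_Parses)
  also have "\<dots> = (\<Sum>x\<in>Idx k a n. card (Parses k a (n - fst x)))"
    by (rule sum.cong) (auto intro: card_image simp: inj_on_def)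
  also have "\<dots> = (\<Sum>L\<in>{1..min n (k+1)}. \<Sum>s\<in>{1..a (k + 1 - L)}. card (Parses k a (n - L)))"
    by (subst sum.Sigma) (auto simp: case_prod_beta)
  also have "\<dots> = (\<Sum>L\<in>{1..min n (k+1)}. a (k + 1 - L) * card (Parses k a (n - L)))"
    by simp
  finally show ?thesis .
qed

lemma Parses_ne: "a k \<ge> 1 \<Longrightarrow> replicate n (1, 1) \<in> Parses k a n"
  by (auto simp: Parses_def goodp_def sum_list_replicate)

lemma card_Parses_ge1: "a k \<ge> 1 \<Longrightarrow> 1 \<le> card (Parses k a n)"
  using Parses_ne[of a k n] finite_Parses[of k a n]
  by (metis One_nat_def Suc_leI card_gt_0_iff empty_iff)



lemma reidx: "(\<Sum>i\<le>k. real (a i) * c ^ i) = (\<Sum>L\<in>{1..k+1}. real (a (k + 1 - L)) * (c::real) ^ (k + 1 - L))"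
  by (rule sum.reindex_bij_witness[where i="\<lambda>L. k + 1 - L" and j="\<lambda>i. k + 1 - i"]) auto

lemma keyid:
  "(c::real) ^ (k+1) * (\<Sum>L\<in>{1..min n (k+1)}. real (a (k + 1 - L)) * c ^ (n - L))
   = c ^ n * (\<Sum>L\<in>{1..min n (k+1)}. real (a (k + 1 - L)) * c ^ (k + 1 - L))"
proof -
  have "c ^ (k+1) * (real (a (k + 1 - L)) * c ^ (n - L)) = c ^ n * (real (a (k + 1 - L)) * c ^ (k + 1 - L))"
    if "L \<in> {1..min n (k+1)}" for L
  proof -
    have "k + 1 + (n - L) = n + (k + 1 - L)" using that by auto
    then have "c ^ (k+1) * c ^ (n - L) = c ^ n * c ^ (k + 1 - L)" by (metis power_add)
    then show ?thesis by (simp add: algebra_simps)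
  qed
  then show ?thesis unfolding sum_distrib_left by (rule sum.cong[OF refl])
qed

lemma upper_count:
  assumes c0: "(c::real) > 0" and root: "c ^ (k+1) = (\<Sum>i\<le>k. real (a i) * c ^ i)"
  shows "real (card (Parses k a n)) \<le> c ^ n"
proof (induction n rule: less_induct)
  case (less n)
  show ?case
  proof (cases "n = 0")
    case True then show ?thesis by (simp add: Parses_0)
  next
    case False
    let ?T = "\<Sum>L\<in>{1..min n (k+1)}. real (a (k + 1 - L)) * c ^ (n - L)"
    have "real (card (Parses k a n)) = (\<Sum>L\<in>{1..min n (k+1)}. real (a (k + 1 - L)) * real (card (Parses k a (n - L))))"
      using card_Parses[of n k a] False by simp
    also have "\<dots> \<le> ?T"
      by (rule sum_mono) (use less False in \<open>auto intro!: mult_left_mono\<close>)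
    finally have A: "real (card (Parses k a n)) \<le> ?T" .
    have "(\<Sum>L\<in>{1..min n (k+1)}. real (a (k + 1 - L)) * c ^ (k + 1 - L))
         \<le> (\<Sum>L\<in>{1..k+1}. real (a (k + 1 - L)) * c ^ (k + 1 - L))"
      by (rule sum_mono2) (use c0 in auto)
    also have "\<dots> = c ^ (k+1)" using root reidx by simp
    finally have "c ^ (k+1) * ?T \<le> c ^ n * c ^ (k+1)"
      unfolding keyid using c0 by (simp add: mult_left_mono)
    then have "?T \<le> c ^ n" using c0 by (simp add: mult.commute)
    then show ?thesis using A by simp
  qed
qed

lemma lower_count:
  assumes c1: "(c::real) \<ge> 1" and root: "c ^ (k+1) = (\<Sum>i\<le>k. real (a i) * c ^ i)" and ak: "a k \<ge> 1"
  shows "c ^ n \<le> c ^ k * real (card (Parses k a n))"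
proof (induction n rule: less_induct)
  case (less n)
  show ?case
  proof (cases "n \<le> k")
    case True
    have "c ^ n \<le> c ^ k" using True c1 by (simp add: power_increasing)
    also have "\<dots> \<le> c ^ k * real (card (Parses k a n))"
      using card_Parses_ge1[where n=n and a=a and k=k] ak c1 by simp
    finally show ?thesis .
  next
    case False
    then have n0: "0 < n" and mn: "min n (k+1) = k + 1" by auto
    let ?T = "\<Sum>L\<in>{1..k+1}. real (a (k + 1 - L)) * c ^ (n - L)"
    have "c ^ (k+1) * ?T = c ^ n * c ^ (k+1)"
      using keyid[where c=c and k=k and n=n and a=a] root reidx[where k=k and a=a and c=c] mn by simp
    then have T: "?T = c ^ n" using c1 by (simp add: mult.commute)
    have "c ^ k * real (card (Parses k a n)) = (\<Sum>L\<in>{1..k+1}. real (a (k + 1 - L)) * (c ^ k * real (card (Parses k a (n - L)))))"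
      using card_Parses[OF n0, where k=k and a=a] mn by (simp add: sum_distrib_left algebra_simps)
    also have "\<dots> \<ge> ?T"
      by (rule sum_mono) (use less n0 in \<open>auto intro!: mult_left_mono\<close>)
    finally show ?thesis using T by simp
  qed
qed



lemma c_pos:
  fixes k :: nat and a :: "nat \<Rightarrow> nat" and c :: real
  assumes pos: "\<forall>i\<le>k. 0 < a i"
    and largest: "\<forall>x::real. x ^ (k+1) = (\<Sum>i\<le>k. real (a i) * x ^ i) \<longrightarrow> x \<le> c"
  shows "c > 0"
proof -
  define p where "p = (\<lambda>x::real. x ^ (k+1) - (\<Sum>i\<le>k. real (a i) * x ^ i))"
  define X where "X = 1 + (\<Sum>i\<le>k. real (a i))"
  have X1: "X \<ge> 1" unfolding X_def by (simp add: sum_nonneg)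
  have "(\<Sum>i\<le>k. real (a i) * X ^ i) \<le> (\<Sum>i\<le>k. real (a i) * X ^ k)"
    by (rule sum_mono) (use X1 in \<open>auto intro!: mult_left_mono power_increasing\<close>)
  also have "\<dots> = (X - 1) * X ^ k" unfolding X_def by (simp add: sum_distrib_right)
  also have "\<dots> \<le> X ^ (k+1)" using X1 by (simp add: algebra_simps)
  finally have pX: "0 \<le> p X" unfolding p_def by simp
  have "(\<Sum>i\<le>k. real (a i) * (0::real) ^ i) = real (a 0)"
    by (simp add: power_0_left sum.atMost_shift)
  then have p0: "p 0 < 0" unfolding p_def using pos by simp
  have "continuous_on {0..X} p" unfolding p_def by (intro continuous_intros)
  then obtain x where x: "0 \<le> x" "x \<le> X" "p x = 0"
    using IVT'[of p 0 0 X] p0 pX X1 by auto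
  have "x \<noteq> 0" using x p0 by auto
  moreover have "x \<le> c" using largest x(3) unfolding p_def by simp
  ultimately show ?thesis using x by simp
qed

lemma c_ge1:
  fixes k :: nat and a :: "nat \<Rightarrow> nat" and c :: real
  assumes pos: "\<forall>i\<le>k. 0 < a i" and c0: "c > 0"
    and root: "c ^ (k+1) = (\<Sum>i\<le>k. real (a i) * c ^ i)"
  shows "c \<ge> 1"
proof (rule ccontr)
  assume "\<not> c \<ge> 1"
  then have "c < 1" by simp
  then have "c ^ (k+1) < 1" using c0 power_Suc_less_one[of c k] by simp
  moreover have "real (a 0) * c ^ 0 \<le> (\<Sum>i\<le>k. real (a i) * c ^ i)"
    by (rule member_le_sum) (use c0 in auto)
  moreover have "real (a 0) \<ge> 1" using pos by (simp add: Suc_leI)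
  ultimately show False using root by simp
qed

definition PP :: "nat \<Rightarrow> (nat \<Rightarrow> nat) \<Rightarrow> ograph set" where
  "PP k a = gr ` {w. VW k a w}"

lemma PP_hered:
  assumes mono: "\<forall>i j. i \<le> j \<and> j \<le> k \<longrightarrow> a i \<le> a j"
  shows "hereditary_property (PP k a)"
  unfolding hereditary_property_def
proof (intro conjI ballI allI impI)
  fix G assume "G \<in> PP k a"
  then obtain w where G: "G = gr w" unfolding PP_def by blast
  show "ordered_graph G" unfolding G ordered_graph_def gr_def by auto
next
  fix G H assume G: "G \<in> PP k a" and H: "ordered_graph H \<and> induced_ordered_subgraph H G"
  then obtain w where Gw: "G = gr w" and w: "VW k a w" unfolding PP_def by blast
  obtain f where sm: "strict_mono_on {0..<fst H} f" and fr: "f ` {0..<fst H} \<subseteq> {0..<fst G}"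
    and adj: "\<forall>i j. i < j \<and> j < fst H \<longrightarrow> ((i,j) \<in> snd H \<longleftrightarrow> (f i, f j) \<in> snd G)"
    using H unfolding induced_ordered_subgraph_def by blast
  have f: "\<forall>i j. i < j \<and> j < fst H \<longrightarrow> f i < f j"
    using sm unfolding strict_mono_on_def by auto
  have fr': "\<forall>i<fst H. f i < length w"
  proof (intro allI impI)
    fix i assume "i < fst H"
    then have "f i \<in> f ` {0..<fst H}" by simp
    then have "f i \<in> {0..<fst G}" using fr by blast
    then show "f i < length w" using Gw by (simp add: gr_def)
  qed
  have "H = gr (map (\<lambda>i. w!(f i)) [0..<fst H])"
    by (rule gr_sub) (use H f fr' adj Gw in auto)
  moreover have "VW k a (map (\<lambda>i. w!(f i)) [0..<fst H])"
    by (rule VW_sub[OF w mono f fr'])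
  ultimately show "H \<in> PP k a" unfolding PP_def by blast
qed

lemma slice_PP: "slice (PP k a) n = gr ` {w. VW k a w \<and> length w = n}"
  unfolding slice_def PP_def by (auto simp: gr_def)

lemma slice_upper:
  assumes mono: "\<forall>i j. i \<le> j \<and> j \<le> k \<longrightarrow> a i \<le> a j"
  shows "slice (PP k a) n \<subseteq> (\<lambda>ps. gr (wordof 0 ps)) ` Parses k a n"
proof
  fix G assume "G \<in> slice (PP k a) n"
  then obtain w where G: "G = gr w" and w: "VW k a w" and l: "length w = n" unfolding slice_PP by blast
  obtain ps where ps: "ps \<in> Parses k a n" and e: "eqv (wordof 0 ps) w"
    using extract_parse[OF w mono, of 0] l by blast
  have "G = gr (wordof 0 ps)" using eqv_gr[OF e] G by simp
  then show "G \<in> (\<lambda>ps. gr (wordof 0 ps)) ` Parses k a n" using ps by blast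
qed

lemma finite_slice:
  assumes mono: "\<forall>i j. i \<le> j \<and> j \<le> k \<longrightarrow> a i \<le> a j"
  shows "finite (slice (PP k a) n)"
  using finite_subset[OF slice_upper[OF mono] finite_imageI[OF finite_Parses]] .

lemma card_slice_upper:
  assumes mono: "\<forall>i j. i \<le> j \<and> j \<le> k \<longrightarrow> a i \<le> a j"
  shows "card (slice (PP k a) n) \<le> card (Parses k a n)"
  using card_mono[OF finite_imageI[OF finite_Parses] slice_upper[OF mono]] card_image_le[OF finite_Parses]
  by (meson le_trans)

lemma card_slice_lower:
  assumes mono: "\<forall>i j. i \<le> j \<and> j \<le> k \<longrightarrow> a i \<le> a j" and n: "a k \<le> n"
  shows "card (Parses k a (n - a k)) \<le> card (slice (PP k a) n)"
proof -
  let ?g = "\<lambda>ps. gr (wordof 0 (gadget (a k) @ ps))"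
  have inj: "inj_on ?g (Parses k a (n - a k))"
    by (rule inj_onI) (use decode[OF mono] in blast)
  have sub: "?g ` Parses k a (n - a k) \<subseteq> slice (PP k a) n"
  proof
    fix G assume "G \<in> ?g ` Parses k a (n - a k)"
    then obtain ps where ps: "ps \<in> Parses k a (n - a k)" and G: "G = ?g ps" by blast
    have good: "\<forall>p\<in>set (gadget (a k) @ ps). goodp k a p"
      using gadget_good[of a k] ps unfolding Parses_def by auto
    have "length (wordof 0 (gadget (a k) @ ps)) = n"
    proof -
      have "sum_list (map fst (gadget (a k))) = a k"
        unfolding gadget_def by (simp add: sum_list_triv comp_def)
      then show ?thesis using ps n unfolding wordof_length Parses_def by simp
    qed
    then show "G \<in> slice (PP k a) n" unfolding slice_PP using G VW_wordof[OF good] by blast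
  qed
  show ?thesis using card_inj_on_le[OF inj sub finite_slice[OF mono]] .
qed



theorem theorem31:
  fixes k :: nat and a :: "nat \<Rightarrow> nat" and c :: real
  assumes pos: "\<forall>i\<le>k. 0 < a i"
    and mono: "\<forall>i j. i \<le> j \<and> j \<le> k \<longrightarrow> a i \<le> a j"
    and root: "c ^ (k+1) = (\<Sum>i\<le>k. real (a i) * c ^ i)"
    and largest: "\<forall>x::real. x ^ (k+1) = (\<Sum>i\<le>k. real (a i) * x ^ i) \<longrightarrow> x \<le> c"
  shows "\<exists>P. hereditary_property P \<and>
           (\<exists>\<epsilon>::nat \<Rightarrow> real. \<epsilon> \<longlonglongrightarrow> 0 \<and>
              (\<forall>\<^sub>F n in sequentially.
                 real (card (slice P n)) = c powr ((1 + \<epsilon> n) * real n)))"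
proof -
  have c0: "c > 0" using c_pos[OF pos largest] .
  have c1: "c \<ge> 1" using c_ge1[OF pos c0 root] .
  have ak: "a k \<ge> 1" using pos by (simp add: Suc_leI)
  define m where "m = a k"
  define N where "N = (\<lambda>n. real (card (slice (PP k a) n)))"
  have Nup: "N n \<le> c ^ n" for n
    using card_slice_upper[OF mono, of n] upper_count[OF c0 root, of n] unfolding N_def by linarith
  have Nlow: "c ^ (n - m) \<le> c ^ k * N n" if "m \<le> n" for n
  proof -
    have "c ^ (n - m) \<le> c ^ k * real (card (Parses k a (n - m)))"
      using lower_count[OF c1 root ak] by blast
    also have "\<dots> \<le> c ^ k * N n"
      using card_slice_lower[OF mono, of n] that c0 unfolding N_def m_def by simp
    finally show ?thesis .
  qed
  have Npos: "N n > 0" if "m \<le> n" for n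
  proof -
    have "0 < c ^ (n - m)" using c0 by simp
    then have "0 < c ^ k * N n" using Nlow[OF that] by linarith
    then show ?thesis using c0 by (simp add: zero_less_mult_iff)
  qed
  show ?thesis
  proof (rule exI[where x="PP k a"], rule conjI)
    show "hereditary_property (PP k a)" by (rule PP_hered[OF mono])
  next
    show "\<exists>\<epsilon>::nat \<Rightarrow> real. \<epsilon> \<longlonglongrightarrow> 0 \<and>
              (\<forall>\<^sub>F n in sequentially.
                 real (card (slice (PP k a) n)) = c powr ((1 + \<epsilon> n) * real n))"
    proof (cases "c = 1")
      case True
      have "\<forall>\<^sub>F n in sequentially. real (card (slice (PP k a) n)) = c powr ((1 + 0) * real n)"
        unfolding eventually_sequentially
      proof (intro exI allI impI)
        fix n assume "m \<le> n"
        have "N n \<le> 1" using Nup[of n] True by simp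
        moreover have "1 \<le> N n" using Nlow[OF \<open>m \<le> n\<close>] True by simp
        ultimately have "N n = 1" by simp
        then show "real (card (slice (PP k a) n)) = c powr ((1 + 0) * real n)"
          using True unfolding N_def by simp
      qed
      then show ?thesis by (intro exI[where x="\<lambda>_. 0"]) auto
    next
      case False
      then have cg: "c > 1" using c1 by simp
      then have lc: "ln c > 0" by simp
      define \<epsilon> where "\<epsilon> = (\<lambda>n. ln (N n) / (real n * ln c) - 1)"
      have ev: "\<forall>\<^sub>F n in sequentially. m \<le> n \<and> 1 \<le> n"
        unfolding eventually_sequentially by (intro exI[where x="max m 1"]) auto
      have eq: "\<forall>\<^sub>F n in sequentially. real (card (slice (PP k a) n)) = c powr ((1 + \<epsilon> n) * real n)"
        using ev
      proof (rule eventually_mono)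
        fix n assume h: "m \<le> n \<and> 1 \<le> n"
        have "(1 + \<epsilon> n) * real n = ln (N n) / ln c"
          unfolding \<epsilon>_def using h lc by (simp add: field_simps)
        then have "c powr ((1 + \<epsilon> n) * real n) = exp (ln (N n))"
          using c0 lc by (simp add: powr_def)
        also have "\<dots> = N n" using Npos h by simp
        finally show "real (card (slice (PP k a) n)) = c powr ((1 + \<epsilon> n) * real n)"
          unfolding N_def by simp
      qed
      have up: "\<forall>\<^sub>F n in sequentially. \<epsilon> n \<le> 0"
        using ev
      proof (rule eventually_mono)
        fix n assume h: "m \<le> n \<and> 1 \<le> n"
        have "0 < N n" using Npos h by simp
        then have "ln (N n) \<le> ln (c ^ n)" using Nup[of n] by (subst ln_le_cancel_iff) (use c0 in auto)
        also have "\<dots> = real n * ln c" using c0 by (simp add: ln_realpow)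
        finally have "ln (N n) / (real n * ln c) \<le> 1" using h lc by (simp add: divide_le_eq_1)
        then show "\<epsilon> n \<le> 0" unfolding \<epsilon>_def by simp
      qed
      have lo: "\<forall>\<^sub>F n in sequentially. - real (m + k) * (1 / real n) \<le> \<epsilon> n"
        using ev
      proof (rule eventually_mono)
        fix n assume h: "m \<le> n \<and> 1 \<le> n"
        have "ln (c ^ (n - m)) \<le> ln (c ^ k * N n)" using Nlow[of n] Npos[of n] h c0 by simp
        then have "real (n - m) * ln c \<le> real k * ln c + ln (N n)"
          using c0 Npos[of n] h by (simp add: ln_realpow ln_mult)
        then have A: "(real n - real m - real k) * ln c \<le> ln (N n)"
          using h by (simp add: of_nat_diff algebra_simps)
        have np: "real n * ln c > 0" using h lc by simp
        have "(real n - real m - real k) / real n = (real n - real m - real k) * ln c / (real n * ln c)"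
          using lc by simp
        also have "\<dots> \<le> ln (N n) / (real n * ln c)"
          by (rule divide_right_mono[OF A]) (use np in linarith)
        finally have B: "(real n - real m - real k) / real n \<le> ln (N n) / (real n * ln c)" .
        have "(real n - real m - real k) / real n = 1 - real (m + k) * (1 / real n)"
          using h by (simp add: field_simps)
        then have "1 - real (m + k) * (1 / real n) \<le> ln (N n) / (real n * ln c)" using B by simp
        then show "- real (m + k) * (1 / real n) \<le> \<epsilon> n" unfolding \<epsilon>_def by linarith
      qed
      have lim1: "(\<lambda>n. - real (m + k) * (1 / real n)) \<longlonglongrightarrow> 0"
        using tendsto_mult[OF tendsto_const lim_inverse_n', of "- real (m + k)"] by simp
      have "\<epsilon> \<longlonglongrightarrow> 0"
        by (rule tendsto_sandwich[OF lo up lim1 tendsto_const])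
      then show ?thesis using eq by blast
    qed
  qed
qed

end
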